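(* Let $\mathcal{M}=\langle S,\iota,\mathsf{Act},P,\mathsf{Z},\mathsf{obs}\rangle$ be an MDP. For every trace $\tau\in\mathsf{Z}^+$ and every state-risk function $r\colon S\to\mathbb{R}_{\ge0}$: $R_r(\tau)=\max_{\mathsf{bel}\in V(\mathsf{est}_{\mathsf{MDP}}(\tau))}\sum_{s\in S}\mathsf{bel}(s)\cdot r(s)$.
   Context: An MDP is a tuple $\langle S,\iota,\mathsf{Act},P,\mathsf{Z},\mathsf{obs}\rangle$: finite state set $S$, initial distribution $\iota\in\mathsf{Distr}(S)$, finite action set $\mathsf{Act}$, partial transition function $P\colon S\times\mathsf{Act}\rightharpoonup\mathsf{Distr}(S)$ (write $P(s,\alpha,s')=P(s,\alpha)(s')$), finite observation set $\mathsf{Z}$, observation function $\mathsf{obs}\colon S\to\mathsf{Distr}(\mathsf{Z})$; $\mathsf{AvAct}(s)=\{\alpha\mid P(s,\alpha)\text{ defined}\}\neq\emptyset$. A finite path is $\pi=s_0a_0\dots a_{n-1}s_n$ with $\iota(s_0)>0$, $P(s_i,a_i)(s_{i+1})>0$; $\mathrm{last}(\pi)=s_n$. A scheduler $\sigma$ maps each finite path $\pi$ to a distribution on $\mathsf{AvAct}(\mathrm{last}(\pi))$; $\Sigma$ is the set of schedulers; $\Pr^\sigma(\pi)=\iota(s_0)\prod_{i<n}\sigma(s_0a_0\dots s_i)(a_i)P(s_i,a_i)(s_{i+1})$. For a trace $\tau=z_0\dots z_n$ and path $\pi=s_0\dots s_m$, $\Pr(\tau\mid\pi)=\prod_{i=0}^n\mathsf{obs}(s_i)(z_i)$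 if $m=n$, else $0$; $\mathrm{Paths}(\tau)$ are the paths with as many states as $\tau$ has observations; $\Pr^\sigma(\tau)=\sum_\pi\Pr^\sigma(\pi)\Pr(\tau\mid\pi)$; $\Pr^\sigma(\pi\mid\tau)=\Pr(\tau\mid\pi)\Pr^\sigma(\pi)/\Pr^\sigma(\tau)$ with $0/0=0$. $R_r(\tau)=\sup_{\sigma\in\Sigma}\sum_{\pi\in\mathrm{Paths}(\tau)}\Pr^\sigma(\pi\mid\tau)r(\mathrm{last}(\pi))$. Beliefs: $\mathsf{Bel}=\mathsf{Distr}(S)\cup\{\mathbf{0}\}$, viewed as vectors in $\mathbb{R}^S$. $\mathsf{est}_{\mathsf{MDP}}(z)=\{b_z\}$ with $b_z(s)=\iota(s)\mathsf{obs}(s)(z)/\sum_{\hat s}\iota(\hat s)\mathsf{obs}(\hat s)(z)$ (or $\mathbf{0}$ if the denominator vanishes), and $\mathsf{est}_{\mathsf{MDP}}(\tau\cdot z)=\bigcup_{\mathsf{bel}\in\mathsf{est}_{\mathsf{MDP}}(\tau)}\mathsf{est}^{\mathsf{up}}(\mathsf{bel},z)$, where $\mathsf{bel}'\in\mathsf{est}^{\mathsf{up}}(\mathsf{bel},z)$ iff there is $\varsigma\colon S\to\mathsf{Distr}(\mathsf{Act})$ with $\varsigma(s)$ supported in $\mathsf{AvAct}(s)$ and $\mathsf{bel}'(s')=\dfrac{\sum_s\mathsf{bel}(s)\sum_\alpha\varsigma(s)(\alpha)P(s,\alpha,s')\mathsf{obs}(s')(z)}{\sum_s\mathsf{bel}(s)\sum_\alpha\varsigma(s)(\alpha)\sum_{\hat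 s}P(s,\alpha,\hat s)\mathsf{obs}(\hat s)(z)}$ for all $s'$ ($0/0=0$). For $B\subseteq\mathsf{Bel}$, a belief in $B$ is interior if it is a convex combination of beliefs in $B\setminus\{\mathsf{bel}\}$; $V(B)\subseteq B$ is the set of non-interior elements (vertices of the convex hull of $B$). *)

theory Defs
  imports Complex_Main
begin

definition is_distr :: "('x::finite \<Rightarrow> real) \<Rightarrow> bool" where
  "is_distr d \<longleftrightarrow> (\<forall>x. 0 \<le> d x) \<and> (\<Sum>x\<in>UNIV. d x) = 1"

definition AvAct :: "('s \<Rightarrow> 'a \<Rightarrow> ('s \<Rightarrow> real) option) \<Rightarrow> 's \<Rightarrow> 'a set" where
  "AvAct P s = {\<alpha>. P s \<alpha> \<noteq> None}"

definition is_mdp ::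
  "('s::finite \<Rightarrow> real) \<Rightarrow> ('s \<Rightarrow> 'a::finite \<Rightarrow> ('s \<Rightarrow> real) option) \<Rightarrow> ('s \<Rightarrow> 'z::finite \<Rightarrow> real) \<Rightarrow> bool" where
  "is_mdp iota P obs \<longleftrightarrow> is_distr iota \<and> (\<forall>s. is_distr (obs s)) \<and>
     (\<forall>s. AvAct P s \<noteq> {}) \<and> (\<forall>s \<alpha> d. P s \<alpha> = Some d \<longrightarrow> is_distr d)"

text \<open>P(s,alpha,s'), meaningful when P(s,alpha) is defined.\<close>
definition Ptr :: "('s \<Rightarrow> 'a \<Rightarrow> ('s \<Rightarrow> real) option) \<Rightarrow> 's \<Rightarrow> 'a \<Rightarrow> 's \<Rightarrow> real" where
  "Ptr P s \<alpha> s' = (case P s \<alpha> of None \<Rightarrow> 0 | Some d \<Rightarrow> d s')"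

text \<open>A finite path s0 a0 s1 ... a(n-1) sn is represented as the pair ([s0,...,sn],[a0,...,a(n-1)]).\<close>
definition is_path ::
  "('s \<Rightarrow> real) \<Rightarrow> ('s \<Rightarrow> 'a \<Rightarrow> ('s \<Rightarrow> real) option) \<Rightarrow> 's list \<times> 'a list \<Rightarrow> bool" where
  "is_path iota P \<pi> \<longleftrightarrow> (let ss = fst \<pi>; as = snd \<pi> in
     length ss = length as + 1 \<and> iota (ss ! 0) > 0 \<and>
     (\<forall>i < length as. P (ss ! i) (as ! i) \<noteq> None \<and> Ptr P (ss ! i) (as ! i) (ss ! Suc i) > 0))"

definition is_scheduler ::
  "('s::finite \<Rightarrow> real) \<Rightarrow> ('s \<Rightarrow> 'a::finite \<Rightarrow> ('s \<Rightarrow> real) option)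
   \<Rightarrow> ('s list \<Rightarrow> 'a list \<Rightarrow> 'a \<Rightarrow> real) \<Rightarrow> bool" where
  "is_scheduler iota P \<sigma> \<longleftrightarrow> (\<forall>ss as. is_path iota P (ss, as) \<longrightarrow>
     is_distr (\<sigma> ss as) \<and> (\<forall>\<alpha>. \<sigma> ss as \<alpha> > 0 \<longrightarrow> \<alpha> \<in> AvAct P (last ss)))"

definition Pr_path ::
  "('s \<Rightarrow> real) \<Rightarrow> ('s \<Rightarrow> 'a \<Rightarrow> ('s \<Rightarrow> real) option)
   \<Rightarrow> ('s list \<Rightarrow> 'a list \<Rightarrow> 'a \<Rightarrow> real) \<Rightarrow> 's list \<times> 'a list \<Rightarrow> real" where
  "Pr_path iota P \<sigma> \<pi> = (let ss = fst \<pi>; as = snd \<pi> in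
     iota (ss ! 0) * (\<Prod>i < length as.
        \<sigma> (take (Suc i) ss) (take i as) (as ! i) * Ptr P (ss ! i) (as ! i) (ss ! Suc i)))"

definition Pr_obs :: "('s \<Rightarrow> 'z \<Rightarrow> real) \<Rightarrow> 'z list \<Rightarrow> 's list \<times> 'a list \<Rightarrow> real" where
  "Pr_obs obs \<tau> \<pi> = (if length (fst \<pi>) = length \<tau>
      then (\<Prod>i < length \<tau>. obs (fst \<pi> ! i) (\<tau> ! i)) else 0)"

definition Paths ::
  "('s \<Rightarrow> real) \<Rightarrow> ('s \<Rightarrow> 'a \<Rightarrow> ('s \<Rightarrow> real) option) \<Rightarrow> 'z list \<Rightarrow> ('s list \<times> 'a list) set" where
  "Paths iota P \<tau> = {\<pi>. is_path iota P \<pi> \<and> length (fst \<pi>) = length \<tau>}"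

definition Pr_trace ::
  "('s \<Rightarrow> real) \<Rightarrow> ('s \<Rightarrow> 'a \<Rightarrow> ('s \<Rightarrow> real) option) \<Rightarrow> ('s \<Rightarrow> 'z \<Rightarrow> real)
   \<Rightarrow> ('s list \<Rightarrow> 'a list \<Rightarrow> 'a \<Rightarrow> real) \<Rightarrow> 'z list \<Rightarrow> real" where
  "Pr_trace iota P obs \<sigma> \<tau> = (\<Sum>\<pi>\<in>Paths iota P \<tau>. Pr_path iota P \<sigma> \<pi> * Pr_obs obs \<tau> \<pi>)"

text \<open>Pr^sigma(pi | tau), with 0/0 = 0 (Isabelle's x / 0 = 0).\<close>
definition Pr_cond ::
  "('s \<Rightarrow> real) \<Rightarrow> ('s \<Rightarrow> 'a \<Rightarrow> ('s \<Rightarrow> real) option) \<Rightarrow> ('s \<Rightarrow> 'z \<Rightarrow> real)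
   \<Rightarrow> ('s list \<Rightarrow> 'a list \<Rightarrow> 'a \<Rightarrow> real) \<Rightarrow> 's list \<times> 'a list \<Rightarrow> 'z list \<Rightarrow> real" where
  "Pr_cond iota P obs \<sigma> \<pi> \<tau> =
     Pr_obs obs \<tau> \<pi> * Pr_path iota P \<sigma> \<pi> / Pr_trace iota P obs \<sigma> \<tau>"

definition Risk ::
  "('s::finite \<Rightarrow> real) \<Rightarrow> ('s \<Rightarrow> 'a::finite \<Rightarrow> ('s \<Rightarrow> real) option) \<Rightarrow> ('s \<Rightarrow> 'z \<Rightarrow> real)
   \<Rightarrow> ('s \<Rightarrow> real) \<Rightarrow> 'z list \<Rightarrow> real" where
  "Risk iota P obs r \<tau> = (SUP \<sigma> \<in> {\<sigma>. is_scheduler iota P \<sigma>}.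
     \<Sum>\<pi>\<in>Paths iota P \<tau>. Pr_cond iota P obs \<sigma> \<pi> \<tau> * r (last (fst \<pi>)))"

definition bel_init :: "('s::finite \<Rightarrow> real) \<Rightarrow> ('s \<Rightarrow> 'z \<Rightarrow> real) \<Rightarrow> 'z \<Rightarrow> 's \<Rightarrow> real" where
  "bel_init iota obs z = (\<lambda>s. iota s * obs s z / (\<Sum>t\<in>UNIV. iota t * obs t z))"

definition est_up ::
  "('s::finite \<Rightarrow> 'a::finite \<Rightarrow> ('s \<Rightarrow> real) option) \<Rightarrow> ('s \<Rightarrow> 'z \<Rightarrow> real)
   \<Rightarrow> ('s \<Rightarrow> real) \<Rightarrow> 'z \<Rightarrow> ('s \<Rightarrow> real) set" where
  "est_up P obs bel z = {bel'. \<exists>sch :: 's \<Rightarrow> 'a \<Rightarrow> real.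
      (\<forall>s. is_distr (sch s) \<and> (\<forall>\<alpha>. sch s \<alpha> > 0 \<longrightarrow> \<alpha> \<in> AvAct P s)) \<and>
      (\<forall>s'. bel' s' =
         (\<Sum>s\<in>UNIV. bel s * (\<Sum>\<alpha>\<in>UNIV. sch s \<alpha> * Ptr P s \<alpha> s' * obs s' z)) /
         (\<Sum>s\<in>UNIV. bel s * (\<Sum>\<alpha>\<in>UNIV. sch s \<alpha> * (\<Sum>t\<in>UNIV. Ptr P s \<alpha> t * obs t z))))}"

text \<open>est on the reversed trace: est_rev (rev tau).\<close>
fun est_rev ::
  "('s::finite \<Rightarrow> real) \<Rightarrow> ('s \<Rightarrow> 'a::finite \<Rightarrow> ('s \<Rightarrow> real) option) \<Rightarrow> ('s \<Rightarrow> 'z \<Rightarrow> real)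
   \<Rightarrow> 'z list \<Rightarrow> ('s \<Rightarrow> real) set" where
  "est_rev iota P obs [] = {}"
| "est_rev iota P obs [z] = {bel_init iota obs z}"
| "est_rev iota P obs (z # y # ys) = (\<Union>bel \<in> est_rev iota P obs (y # ys). est_up P obs bel z)"

definition est_MDP ::
  "('s::finite \<Rightarrow> real) \<Rightarrow> ('s \<Rightarrow> 'a::finite \<Rightarrow> ('s \<Rightarrow> real) option) \<Rightarrow> ('s \<Rightarrow> 'z \<Rightarrow> real)
   \<Rightarrow> 'z list \<Rightarrow> ('s \<Rightarrow> real) set" where
  "est_MDP iota P obs \<tau> = est_rev iota P obs (rev \<tau>)"

definition convex_comb_of :: "('s::finite \<Rightarrow> real) set \<Rightarrow> ('s \<Rightarrow> real) \<Rightarrow> bool" where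
  "convex_comb_of A b \<longleftrightarrow> (\<exists>F u. finite F \<and> F \<subseteq> A \<and> (\<forall>x\<in>F. 0 \<le> u x) \<and> (\<Sum>x\<in>F. u x) = 1
      \<and> b = (\<lambda>s. \<Sum>x\<in>F. u x * x s))"

definition Vert :: "('s::finite \<Rightarrow> real) set \<Rightarrow> ('s \<Rightarrow> real) set" where
  "Vert B = {b \<in> B. \<not> convex_comb_of (B - {b}) b}"

end

theory Submission
  imports Defs "HOL-Library.FuncSet"
begin

definition dotv :: "('s::finite \<Rightarrow> real) \<Rightarrow> ('s \<Rightarrow> real) \<Rightarrow> real" where
  "dotv x r = (\<Sum>s\<in>UNIV. x s * r s)"
definition sqv :: "('s::finite \<Rightarrow> real) \<Rightarrow> real" where
  "sqv x = (\<Sum>s\<in>UNIV. x s * x s)"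

lemma sqv_nonneg: "0 \<le> sqv x"
  unfolding sqv_def by (simp add: sum_nonneg)

lemma sqv_zero: "sqv x = 0 \<Longrightarrow> x s = 0"
  unfolding sqv_def
  using sum_nonneg_eq_0_iff[of UNIV "\<lambda>s. x s * x s"] by simp

lemma conv_identity:
  fixes y :: "'i \<Rightarrow> 's::finite \<Rightarrow> real"
  assumes "finite F" "(\<Sum>i\<in>F. c i) = 1" "x = (\<lambda>s. \<Sum>i\<in>F. c i * y i s)"
  shows "(\<Sum>i\<in>F. c i * sqv (\<lambda>s. y i s - x s)) = (\<Sum>i\<in>F. c i * sqv (y i)) - sqv x"
proof -
  have e: "sqv (\<lambda>s. y i s - x s) = sqv (y i) - 2 * (\<Sum>s\<in>UNIV. y i s * x s) + sqv x" for i
  proof -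
    have "sqv (\<lambda>s. y i s - x s) = (\<Sum>s\<in>UNIV. y i s * y i s - 2 * (y i s * x s) + x s * x s)"
      unfolding sqv_def by (rule sum.cong) (auto simp: algebra_simps)
    also have "\<dots> = sqv (y i) - 2 * (\<Sum>s\<in>UNIV. y i s * x s) + sqv x"
      unfolding sqv_def by (simp only: sum.distrib sum_subtractf sum_distrib_left)
    finally show ?thesis .
  qed
  have "(\<Sum>i\<in>F. c i * (\<Sum>s\<in>UNIV. y i s * x s)) = (\<Sum>i\<in>F. (\<Sum>s\<in>UNIV. c i * y i s * x s))"
    by (simp add: sum_distrib_left mult.assoc)
  also have "\<dots> = (\<Sum>s\<in>UNIV. (\<Sum>i\<in>F. c i * y i s * x s))"
    by (rule sum.swap)
  also have "\<dots> = (\<Sum>s\<in>UNIV. (\<Sum>i\<in>F. c i * y i s) * x s)"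
    by (simp add: sum_distrib_right)
  also have "\<dots> = sqv x" using assms(3) by (simp add: sqv_def)
  finally have h: "(\<Sum>i\<in>F. c i * (\<Sum>s\<in>UNIV. y i s * x s)) = sqv x" .
  have "(\<Sum>i\<in>F. c i * sqv (\<lambda>s. y i s - x s)) =
        (\<Sum>i\<in>F. c i * sqv (y i) - 2 * (c i * (\<Sum>s\<in>UNIV. y i s * x s)) + c i * sqv x)"
    unfolding e by (rule sum.cong) (auto simp: algebra_simps)
  also have "\<dots> = (\<Sum>i\<in>F. c i * sqv (y i)) - 2 * (\<Sum>i\<in>F. c i * (\<Sum>s\<in>UNIV. y i s * x s)) + (\<Sum>i\<in>F. c i) * sqv x"
    by (simp only: sum.distrib sum_subtractf sum_distrib_left sum_distrib_right)
  finally show ?thesis using h assms(2) by simp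
qed
lemma vertex_crit:
  fixes E :: "('s::finite \<Rightarrow> real) set"
  assumes bE: "b \<in> E"
    and le: "\<And>x. x \<in> E \<Longrightarrow> dotv x r \<le> dotv b r"
    and sq: "\<And>x. x \<in> E \<Longrightarrow> dotv x r = dotv b r \<Longrightarrow> sqv x \<le> sqv b"
  shows "b \<in> Vert E"
proof -
  have "\<not> convex_comb_of (E - {b}) b"
  proof
    assume "convex_comb_of (E - {b}) b"
    then obtain F u where F: "finite F" "F \<subseteq> E - {b}" "\<forall>x\<in>F. 0 \<le> u x" "(\<Sum>x\<in>F. u x) = 1"
      and bd: "b = (\<lambda>s. \<Sum>x\<in>F. u x * x s)" unfolding convex_comb_of_def by blast
    have db: "dotv b r = (\<Sum>x\<in>F. u x * dotv x r)"
    proof -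
      have "dotv b r = (\<Sum>s\<in>UNIV. \<Sum>x\<in>F. u x * x s * r s)"
        by (subst bd) (simp add: dotv_def sum_distrib_right)
      also have "\<dots> = (\<Sum>x\<in>F. \<Sum>s\<in>UNIV. u x * x s * r s)" by (rule sum.swap)
      also have "\<dots> = (\<Sum>x\<in>F. u x * dotv x r)" by (simp add: dotv_def sum_distrib_left mult.assoc)
      finally show ?thesis .
    qed
    have "(\<Sum>x\<in>F. u x * (dotv b r - dotv x r)) = 0"
    proof -
      have "(\<Sum>x\<in>F. u x * (dotv b r - dotv x r)) = (\<Sum>x\<in>F. u x) * dotv b r - (\<Sum>x\<in>F. u x * dotv x r)"
        by (simp add: right_diff_distrib sum_subtractf sum_distrib_right)
      then show ?thesis using db F(4) by simp
    qed
    moreover have "\<forall>x\<in>F. 0 \<le> u x * (dotv b r - dotv x r)" using F le by auto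
    ultimately have z: "\<forall>x\<in>F. u x * (dotv b r - dotv x r) = 0"
      using sum_nonneg_eq_0_iff[OF F(1), of "\<lambda>x. u x * (dotv b r - dotv x r)"] by simp
    have t: "\<forall>x\<in>F. u x * sqv x \<le> u x * sqv b"
    proof
      fix x assume x: "x \<in> F"
      show "u x * sqv x \<le> u x * sqv b"
      proof (cases "u x = 0")
        case False
        then have "dotv x r = dotv b r" using z x by auto
        then show ?thesis using sq[of x] x F(2,3) by (auto intro: mult_left_mono)
      qed simp
    qed
    have ci: "(\<Sum>x\<in>F. u x * sqv (\<lambda>s. x s - b s)) = (\<Sum>x\<in>F. u x * sqv x) - sqv b"
      using conv_identity[of F u b "\<lambda>x. x", OF F(1) F(4) bd] by simp
    have "(\<Sum>x\<in>F. u x * sqv x) \<le> (\<Sum>x\<in>F. u x * sqv b)" using t by (intro sum_mono) auto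
    also have "\<dots> = (\<Sum>x\<in>F. u x) * sqv b" by (simp add: sum_distrib_right)
    also have "\<dots> = sqv b" using F(4) by simp
    finally have c1: "(\<Sum>x\<in>F. u x * sqv (\<lambda>s. x s - b s)) \<le> 0" using ci by simp
    have c2: "\<forall>x\<in>F. 0 \<le> u x * sqv (\<lambda>s. x s - b s)" using F(3) by (simp add: sqv_nonneg)
    have z2: "\<forall>x\<in>F. u x * sqv (\<lambda>s. x s - b s) = 0"
    proof -
      have "(\<Sum>x\<in>F. u x * sqv (\<lambda>s. x s - b s)) = 0"
        using c1 c2 by (meson antisym sum_nonneg)
      then show ?thesis
        using sum_nonneg_eq_0_iff[OF F(1), of "\<lambda>x. u x * sqv (\<lambda>s. x s - b s)"] c2 by simp
    qed
    obtain x where x: "x \<in> F" "u x \<noteq> 0"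
      using F(4) by (metis sum.neutral zero_neq_one)
    then have "sqv (\<lambda>s. x s - b s) = 0" using z2 by auto
    then have "\<forall>s. x s - b s = 0" using sqv_zero by fastforce
    then have "x = b" by auto
    then show False using x F(2) by auto
  qed
  then show ?thesis using bE unfolding Vert_def by auto
qed

lemma prod_sum_decomp:
  fixes p h :: "'s::finite \<Rightarrow> 'a \<Rightarrow> real"
  assumes fin: "\<And>s. finite (B s)" and one: "\<And>s. (\<Sum>\<alpha>\<in>B s. p s \<alpha>) = 1"
  shows "(\<Sum>f\<in>PiE UNIV B. (\<Prod>s\<in>UNIV. p s (f s)) * (\<Sum>s\<in>UNIV. h s (f s)))
       = (\<Sum>s\<in>UNIV. \<Sum>\<alpha>\<in>B s. p s \<alpha> * h s \<alpha>)"
proof -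
  have "(\<Sum>f\<in>PiE UNIV B. (\<Prod>s\<in>UNIV. p s (f s)) * (\<Sum>s\<in>UNIV. h s (f s)))
      = (\<Sum>f\<in>PiE UNIV B. \<Sum>s0\<in>UNIV. (\<Prod>s\<in>UNIV. p s (f s)) * h s0 (f s0))"
    by (simp add: sum_distrib_left)
  also have "\<dots> = (\<Sum>s0\<in>UNIV. \<Sum>f\<in>PiE UNIV B. (\<Prod>s\<in>UNIV. p s (f s)) * h s0 (f s0))"
    by (rule sum.swap)
  also have "\<dots> = (\<Sum>s0\<in>UNIV. \<Sum>\<alpha>\<in>B s0. p s0 \<alpha> * h s0 \<alpha>)"
  proof (rule sum.cong[OF refl])
    fix s0
    define q where "q s \<alpha> = p s \<alpha> * (if s = s0 then h s0 \<alpha> else 1)" for s \<alpha>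
    have a: "(\<Prod>s\<in>UNIV. q s (f s)) = (\<Prod>s\<in>UNIV. p s (f s)) * h s0 (f s0)" for f :: "'s \<Rightarrow> 'a"
    proof -
      have "(\<Prod>s\<in>UNIV. q s (f s)) = (\<Prod>s\<in>UNIV. p s (f s)) * (\<Prod>s\<in>UNIV. (if s = s0 then h s0 (f s) else 1))"
        unfolding q_def prod.distrib by (simp cong: if_cong)
      also have "(\<Prod>s\<in>UNIV. (if s = s0 then h s0 (f s) else 1)) = h s0 (f s0)"
        by (subst prod.delta) auto
      finally show ?thesis .
    qed
    have "(\<Sum>f\<in>PiE UNIV B. (\<Prod>s\<in>UNIV. p s (f s)) * h s0 (f s0)) = (\<Sum>f\<in>PiE UNIV B. \<Prod>s\<in>UNIV. q s (f s))"
      using a by simp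
    also have "\<dots> = (\<Prod>s\<in>UNIV. \<Sum>\<alpha>\<in>B s. q s \<alpha>)"
      by (rule prod_sum_PiE[symmetric]) (auto simp: fin)
    also have "\<dots> = (\<Prod>s\<in>UNIV. if s = s0 then (\<Sum>\<alpha>\<in>B s0. p s0 \<alpha> * h s0 \<alpha>) else 1)"
      by (rule prod.cong[OF refl]) (auto simp: q_def one)
    also have "\<dots> = (\<Sum>\<alpha>\<in>B s0. p s0 \<alpha> * h s0 \<alpha>)"
      by (subst prod.delta) auto
    finally show "(\<Sum>f\<in>PiE UNIV B. (\<Prod>s\<in>UNIV. p s (f s)) * h s0 (f s0)) = (\<Sum>\<alpha>\<in>B s0. p s0 \<alpha> * h s0 \<alpha>)" .
  qed
  finally show ?thesis .
qed

definition cc :: "('s::finite \<Rightarrow> real) set \<Rightarrow> ('s \<Rightarrow> real) \<Rightarrow> bool" where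
  "cc G u \<longleftrightarrow> (\<exists>c. (\<forall>g\<in>G. 0 \<le> c g) \<and> (\<Sum>g\<in>G. c g) = 1 \<and> u = (\<lambda>s. \<Sum>g\<in>G. c g * g s))"

lemma cc_image:
  fixes h :: "'i \<Rightarrow> 's::finite \<Rightarrow> real"
  assumes "finite A" "\<forall>p\<in>A. 0 \<le> w p" "(\<Sum>p\<in>A. w p) = 1" "v = (\<lambda>s. \<Sum>p\<in>A. w p * h p s)"
  shows "cc (h ` A) v"
proof -
  define c where "c g = (\<Sum>p\<in>{p\<in>A. h p = g}. w p)" for g
  have "\<forall>g\<in>h ` A. 0 \<le> c g" using assms(2) unfolding c_def by (auto intro: sum_nonneg)
  moreover have "(\<Sum>g\<in>h ` A. c g) = 1"
    unfolding c_def using sum.image_gen[OF assms(1), of w h] assms(3) by simp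
  moreover have "v = (\<lambda>s. \<Sum>g\<in>h ` A. c g * g s)"
  proof
    fix s
    have "(\<Sum>g\<in>h ` A. c g * g s) = (\<Sum>g\<in>h ` A. \<Sum>p\<in>{p\<in>A. h p = g}. w p * h p s)"
      unfolding c_def sum_distrib_right by (rule sum.cong[OF refl]) auto
    also have "\<dots> = (\<Sum>p\<in>A. w p * h p s)"
      using sum.image_gen[OF assms(1), of "\<lambda>p. w p * h p s" h] by simp
    finally show "v s = (\<Sum>g\<in>h ` A. c g * g s)" using assms(4) by simp
  qed
  ultimately show ?thesis unfolding cc_def by blast
qed

definition nrm :: "('s::finite \<Rightarrow> real) \<Rightarrow> 's \<Rightarrow> real" where
  "nrm u = (\<lambda>s. u s / (\<Sum>t\<in>UNIV. u t))"

lemma nrm_scale: "c \<noteq> 0 \<Longrightarrow> nrm (\<lambda>s. c * v s) = nrm v"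
  unfolding nrm_def by (auto simp: sum_distrib_left[symmetric])

lemma nrm_nonneg: "\<forall>s. 0 \<le> u s \<Longrightarrow> 0 \<le> nrm u s"
  unfolding nrm_def by (simp add: sum_nonneg)

lemma nonneg_sum0: "\<forall>s. 0 \<le> (u::'s::finite \<Rightarrow> real) s \<Longrightarrow> (\<Sum>t\<in>UNIV. u t) = 0 \<Longrightarrow> u s = 0"
  using sum_nonneg_eq_0_iff[of UNIV u] by simp

lemma nrm_idem: assumes "\<forall>s. 0 \<le> u s" shows "nrm u = (\<lambda>s. (1 / (\<Sum>t\<in>UNIV. u t)) * u s)"
  unfolding nrm_def by auto

lemma nrm_times: assumes "\<forall>s. 0 \<le> (u::'s::finite\<Rightarrow>real) s" shows "u s = (\<Sum>t\<in>UNIV. u t) * nrm u s"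
  using nonneg_sum0[OF assms] unfolding nrm_def by (cases "(\<Sum>t\<in>UNIV. u t) = 0") auto

locale mdp =
  fixes iota :: "'s::finite \<Rightarrow> real"
    and P :: "'s \<Rightarrow> 'a::finite \<Rightarrow> ('s \<Rightarrow> real) option"
    and obs :: "'s \<Rightarrow> 'z::finite \<Rightarrow> real"
  assumes mdp: "is_mdp iota P obs"
begin

lemma iota_nn: "0 \<le> iota s" using mdp unfolding is_mdp_def is_distr_def by auto
lemma obs_nn: "0 \<le> obs s z" using mdp unfolding is_mdp_def is_distr_def by auto
lemma Ptr_nn: "0 \<le> Ptr P s \<alpha> t"
  using mdp unfolding is_mdp_def is_distr_def Ptr_def by (auto split: option.splits)
lemma AvAct_ne: "AvAct P s \<noteq> {}" using mdp unfolding is_mdp_def by auto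

definition validsch :: "('s \<Rightarrow> 'a \<Rightarrow> real) \<Rightarrow> bool" where
  "validsch sch \<longleftrightarrow> (\<forall>s. is_distr (sch s) \<and> (\<forall>\<alpha>. sch s \<alpha> > 0 \<longrightarrow> \<alpha> \<in> AvAct P s))"

definition step :: "('s \<Rightarrow> real) \<Rightarrow> ('s \<Rightarrow> 'a \<Rightarrow> real) \<Rightarrow> 'z \<Rightarrow> 's \<Rightarrow> real" where
  "step u sch z = (\<lambda>s'. \<Sum>s\<in>UNIV. u s * (\<Sum>\<alpha>\<in>UNIV. sch s \<alpha> * Ptr P s \<alpha> s' * obs s' z))"

definition u0 :: "'z \<Rightarrow> 's \<Rightarrow> real" where
  "u0 z = (\<lambda>s. iota s * obs s z)"

definition det :: "('s \<Rightarrow> 'a) \<Rightarrow> 's \<Rightarrow> 'a \<Rightarrow> real" where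
  "det f = (\<lambda>s \<alpha>. if \<alpha> = f s then 1 else 0)"

definition Sel :: "('s \<Rightarrow> 'a) set" where
  "Sel = PiE UNIV (AvAct P)"

fun UMr :: "'z list \<Rightarrow> ('s \<Rightarrow> real) set" where
  "UMr [] = {}"
| "UMr [z] = {u0 z}"
| "UMr (z # y # ys) = {step u sch z | u sch. u \<in> UMr (y # ys) \<and> validsch sch}"

fun GDr :: "'z list \<Rightarrow> ('s \<Rightarrow> real) set" where
  "GDr [] = {}"
| "GDr [z] = {u0 z}"
| "GDr (z # y # ys) = (\<lambda>(u, f). step u (det f) z) ` (GDr (y # ys) \<times> Sel)"

lemma Sel_ne: "Sel \<noteq> {}"
  unfolding Sel_def using AvAct_ne by (simp add: PiE_eq_empty_iff)

lemma finite_Sel: "finite Sel" unfolding Sel_def by simp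

lemma det_valid: "f \<in> Sel \<Longrightarrow> validsch (det f)"
  unfolding validsch_def det_def Sel_def is_distr_def
  by (auto simp: PiE_iff)

lemma validsch_nn: "validsch sch \<Longrightarrow> 0 \<le> sch s \<alpha>"
  unfolding validsch_def is_distr_def by auto

lemma validsch_supp: "validsch sch \<Longrightarrow> \<alpha> \<notin> AvAct P s \<Longrightarrow> sch s \<alpha> = 0"
proof -
  assume a: "validsch sch" "\<alpha> \<notin> AvAct P s"
  then have "0 \<le> sch s \<alpha>" "\<not> sch s \<alpha> > 0" unfolding validsch_def is_distr_def by auto
  then show ?thesis by linarith
qed

lemma validsch_sum: "validsch sch \<Longrightarrow> (\<Sum>\<alpha>\<in>AvAct P s. sch s \<alpha>) = 1"
proof -
  assume v: "validsch sch"
  have "(\<Sum>\<alpha>\<in>AvAct P s. sch s \<alpha>) = (\<Sum>\<alpha>\<in>UNIV. sch s \<alpha>)"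
    by (rule sum.mono_neutral_left) (auto simp: validsch_supp[OF v])
  also have "\<dots> = 1" using v unfolding validsch_def is_distr_def by auto
  finally show ?thesis .
qed

lemma step_nn: "\<forall>s. 0 \<le> u s \<Longrightarrow> validsch sch \<Longrightarrow> 0 \<le> step u sch z s'"
  unfolding step_def
  by (intro sum_nonneg mult_nonneg_nonneg) (auto simp: validsch_nn Ptr_nn obs_nn)

lemma UMr_nn: "u \<in> UMr ys \<Longrightarrow> 0 \<le> u s"
proof (induction ys arbitrary: u s rule: UMr.induct)
  case (2 z) then show ?case by (auto simp: u0_def iota_nn obs_nn)
next
  case (3 z y ys) then show ?case using step_nn by auto
qed auto

lemma GDr_sub: "GDr ys \<subseteq> UMr ys"
proof (induction ys rule: GDr.induct)
  case (3 z y ys) then show ?case using det_valid by fastforce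
qed auto

lemma GDr_fin: "finite (GDr ys)"
  by (induction ys rule: GDr.induct) (auto simp: finite_Sel)

lemma GDr_ne: "ys \<noteq> [] \<Longrightarrow> GDr ys \<noteq> {}"
  by (induction ys rule: GDr.induct) (auto simp: Sel_ne)

lemma step_det: "step g (det f) z s' = (\<Sum>s\<in>UNIV. g s * Ptr P s (f s) s' * obs s' z)"
proof -
  have "(\<Sum>\<alpha>\<in>UNIV. det f s \<alpha> * Ptr P s \<alpha> s' * obs s' z) = Ptr P s (f s) s' * obs s' z" for s
  proof -
    have "(\<Sum>\<alpha>\<in>UNIV. det f s \<alpha> * Ptr P s \<alpha> s' * obs s' z) =
      (\<Sum>\<alpha>\<in>UNIV. if \<alpha> = f s then Ptr P s \<alpha> s' * obs s' z else 0)"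
      by (rule sum.cong) (auto simp: det_def)
    then show ?thesis by simp
  qed
  then show ?thesis unfolding step_def by (simp add: mult.assoc)
qed

lemma step_decomp:
  assumes v: "validsch sch"
  shows "step g sch z s' = (\<Sum>f\<in>Sel. (\<Prod>s\<in>UNIV. sch s (f s)) * step g (det f) z s')"
proof -
  define h where "h s \<alpha> = g s * Ptr P s \<alpha> s' * obs s' z" for s \<alpha>
  have "step g sch z s' = (\<Sum>s\<in>UNIV. \<Sum>\<alpha>\<in>UNIV. sch s \<alpha> * h s \<alpha>)"
    unfolding step_def h_def by (simp add: sum_distrib_left algebra_simps)
  also have "\<dots> = (\<Sum>s\<in>UNIV. \<Sum>\<alpha>\<in>AvAct P s. sch s \<alpha> * h s \<alpha>)"
    by (rule sum.cong[OF refl], rule sum.mono_neutral_right) (auto simp: validsch_supp[OF v])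
  also have "\<dots> = (\<Sum>f\<in>Sel. (\<Prod>s\<in>UNIV. sch s (f s)) * (\<Sum>s\<in>UNIV. h s (f s)))"
    unfolding Sel_def by (rule prod_sum_decomp[symmetric]) (auto simp: validsch_sum[OF v])
  also have "\<dots> = (\<Sum>f\<in>Sel. (\<Prod>s\<in>UNIV. sch s (f s)) * step g (det f) z s')"
    by (simp add: step_det h_def)
  finally show ?thesis .
qed

lemma step_lin:
  fixes G :: "('s \<Rightarrow> real) set"
  shows "step (\<lambda>s. \<Sum>g\<in>G. c g * g s) sch z s' = (\<Sum>g\<in>G. c g * step g sch z s')"
proof -
  have "step (\<lambda>s. \<Sum>g\<in>G. c g * g s) sch z s' =
     (\<Sum>s\<in>UNIV. \<Sum>g\<in>G. c g * (g s * (\<Sum>\<alpha>\<in>UNIV. sch s \<alpha> * Ptr P s \<alpha> s' * obs s' z)))"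
    unfolding step_def by (simp add: sum_distrib_right mult.assoc)
  also have "\<dots> = (\<Sum>g\<in>G. \<Sum>s\<in>UNIV. c g * (g s * (\<Sum>\<alpha>\<in>UNIV. sch s \<alpha> * Ptr P s \<alpha> s' * obs s' z)))"
    by (rule sum.swap)
  also have "\<dots> = (\<Sum>g\<in>G. c g * step g sch z s')"
    unfolding step_def by (simp add: sum_distrib_left)
  finally show ?thesis .
qed

lemma UMr_cc: "u \<in> UMr ys \<Longrightarrow> cc (GDr ys) u"
proof (induction ys arbitrary: u rule: UMr.induct)
  case (2 z) then show ?case unfolding cc_def by (intro exI[of _ "\<lambda>_. 1"]) auto
next
  case (3 z y ys)
  then obtain v sch where u: "u = step v sch z" and v: "v \<in> UMr (y # ys)" and sch: "validsch sch" by auto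
  from 3(1)[OF v] obtain c where c: "\<forall>g\<in>GDr (y # ys). 0 \<le> c g" "(\<Sum>g\<in>GDr (y # ys). c g) = 1"
    and vc: "v = (\<lambda>s. \<Sum>g\<in>GDr (y # ys). c g * g s)" unfolding cc_def by blast
  define G where "G = GDr (y # ys)"
  define nu where "nu f = (\<Prod>s\<in>UNIV. sch s (f s))" for f :: "'s \<Rightarrow> 'a"
  define w where "w p = c (fst p) * nu (snd p)" for p :: "('s \<Rightarrow> real) \<times> ('s \<Rightarrow> 'a)"
  have finG: "finite G" unfolding G_def by (rule GDr_fin)
  have nu1: "(\<Sum>f\<in>Sel. nu f) = 1"
  proof -
    have "(\<Sum>f\<in>Sel. nu f) = (\<Prod>s\<in>UNIV. \<Sum>\<alpha>\<in>AvAct P s. sch s \<alpha>)"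
      unfolding nu_def Sel_def by (rule prod_sum_PiE[symmetric]) auto
    also have "\<dots> = 1" by (simp add: validsch_sum[OF sch])
    finally show ?thesis .
  qed
  have "cc ((\<lambda>(u, f). step u (det f) z) ` (G \<times> Sel)) u"
  proof (rule cc_image)
    show "finite (G \<times> Sel)" using finG finite_Sel by simp
    show "\<forall>p\<in>G \<times> Sel. 0 \<le> w p"
      using c(1) validsch_nn[OF sch] unfolding w_def nu_def G_def
      by (auto intro!: mult_nonneg_nonneg prod_nonneg)
    show "(\<Sum>p\<in>G \<times> Sel. w p) = 1"
    proof -
      have "(\<Sum>p\<in>G \<times> Sel. w p) = (\<Sum>g\<in>G. \<Sum>f\<in>Sel. c g * nu f)"
        by (simp add: sum.cartesian_product split_def w_def)
      also have "\<dots> = (\<Sum>g\<in>G. c g)" by (simp add: sum_distrib_left[symmetric] nu1)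
      finally show ?thesis using c(2) G_def by simp
    qed
    show "u = (\<lambda>s. \<Sum>p\<in>G \<times> Sel. w p * (case p of (u, f) \<Rightarrow> step u (det f) z) s)"
    proof
      fix s'
      have "u s' = (\<Sum>g\<in>G. c g * step g sch z s')" unfolding u vc G_def by (rule step_lin)
      also have "\<dots> = (\<Sum>g\<in>G. c g * (\<Sum>f\<in>Sel. nu f * step g (det f) z s'))"
        unfolding nu_def using step_decomp[OF sch] by simp
      also have "\<dots> = (\<Sum>p\<in>G \<times> Sel. w p * (case p of (u, f) \<Rightarrow> step u (det f) z) s')"
        by (simp add: sum.cartesian_product split_def w_def sum_distrib_left mult.assoc)
      finally show "u s' = (\<Sum>p\<in>G \<times> Sel. w p * (case p of (u, f) \<Rightarrow> step u (det f) z) s')" .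
    qed
  qed
  then show ?case unfolding G_def by simp
qed auto

end

lemma dotv_comb:
  assumes "x = (\<lambda>s. \<Sum>g\<in>G. d g * y g s)"
  shows "dotv x r = (\<Sum>g\<in>G. d g * dotv (y g) r)"
proof -
  have "dotv x r = (\<Sum>s\<in>UNIV. \<Sum>g\<in>G. d g * y g s * r s)"
    unfolding assms dotv_def by (simp add: sum_distrib_right)
  also have "\<dots> = (\<Sum>g\<in>G. \<Sum>s\<in>UNIV. d g * y g s * r s)" by (rule sum.swap)
  also have "\<dots> = (\<Sum>g\<in>G. d g * dotv (y g) r)" by (simp add: dotv_def sum_distrib_left mult.assoc)
  finally show ?thesis .
qed

lemma cc_bound:
  fixes y :: "'i \<Rightarrow> 's::finite \<Rightarrow> real"
  assumes fin: "finite G" and d: "\<forall>g\<in>G. 0 \<le> d g" "(\<Sum>g\<in>G. d g) = 1"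
    and x: "x = (\<lambda>s. \<Sum>g\<in>G. d g * y g s)"
    and le: "\<forall>g\<in>G. dotv (y g) r \<le> M" and sq: "\<forall>g\<in>G. dotv (y g) r = M \<longrightarrow> sqv (y g) \<le> B"
  shows "dotv x r \<le> M \<and> (dotv x r = M \<longrightarrow> sqv x \<le> B)"
proof -
  have dx: "dotv x r = (\<Sum>g\<in>G. d g * dotv (y g) r)" by (rule dotv_comb[OF x])
  have "(\<Sum>g\<in>G. d g * dotv (y g) r) \<le> (\<Sum>g\<in>G. d g * M)"
    using d le by (intro sum_mono mult_left_mono) auto
  also have "\<dots> = (\<Sum>g\<in>G. d g) * M" by (simp add: sum_distrib_right)
  also have "\<dots> = M" using d(2) by simp
  finally have le1: "dotv x r \<le> M" using dx by simp
  have "dotv x r = M \<longrightarrow> sqv x \<le> B"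
  proof
    assume eq: "dotv x r = M"
    have "(\<Sum>g\<in>G. d g * (M - dotv (y g) r)) = (\<Sum>g\<in>G. d g) * M - (\<Sum>g\<in>G. d g * dotv (y g) r)"
      by (simp add: right_diff_distrib sum_subtractf sum_distrib_right)
    then have s0: "(\<Sum>g\<in>G. d g * (M - dotv (y g) r)) = 0" using eq dx d(2) by simp
    have nn: "\<forall>g\<in>G. 0 \<le> d g * (M - dotv (y g) r)" using d le by auto
    have z: "\<forall>g\<in>G. d g * (M - dotv (y g) r) = 0"
      using sum_nonneg_eq_0_iff[OF fin, of "\<lambda>g. d g * (M - dotv (y g) r)"] s0 nn by simp
    have t: "\<forall>g\<in>G. d g * sqv (y g) \<le> d g * B"
    proof
      fix g assume g: "g \<in> G"
      show "d g * sqv (y g) \<le> d g * B"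
      proof (cases "d g = 0")
        case False
        then have "dotv (y g) r = M" using z g by auto
        then show ?thesis using sq g d(1) by (auto intro: mult_left_mono)
      qed simp
    qed
    have ci: "(\<Sum>g\<in>G. d g * sqv (\<lambda>s. y g s - x s)) = (\<Sum>g\<in>G. d g * sqv (y g)) - sqv x"
      by (rule conv_identity[OF fin d(2) x])
    have "0 \<le> (\<Sum>g\<in>G. d g * sqv (\<lambda>s. y g s - x s))"
      using d(1) by (intro sum_nonneg) (simp add: sqv_nonneg)
    then have "sqv x \<le> (\<Sum>g\<in>G. d g * sqv (y g))" using ci by simp
    also have "\<dots> \<le> (\<Sum>g\<in>G. d g * B)" using t by (intro sum_mono) auto
    also have "\<dots> = (\<Sum>g\<in>G. d g) * B" by (simp add: sum_distrib_right)
    also have "\<dots> = B" using d(2) by simp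
    finally show "sqv x \<le> B" .
  qed
  then show ?thesis using le1 by simp
qed

context mdp begin

lemma step_sum: "(\<Sum>s'\<in>UNIV. step bel sch z s') =
  (\<Sum>s\<in>UNIV. bel s * (\<Sum>\<alpha>\<in>UNIV. sch s \<alpha> * (\<Sum>t\<in>UNIV. Ptr P s \<alpha> t * obs t z)))"
proof -
  have "(\<Sum>s'\<in>UNIV. step bel sch z s') =
      (\<Sum>s'\<in>UNIV. \<Sum>s\<in>UNIV. \<Sum>\<alpha>\<in>UNIV. bel s * sch s \<alpha> * (Ptr P s \<alpha> s' * obs s' z))"
    unfolding step_def by (simp add: sum_distrib_left mult.assoc)
  also have "\<dots> = (\<Sum>s\<in>UNIV. \<Sum>s'\<in>UNIV. \<Sum>\<alpha>\<in>UNIV. bel s * sch s \<alpha> * (Ptr P s \<alpha> s' * obs s' z))"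
    by (rule sum.swap)
  also have "\<dots> = (\<Sum>s\<in>UNIV. \<Sum>\<alpha>\<in>UNIV. \<Sum>s'\<in>UNIV. bel s * sch s \<alpha> * (Ptr P s \<alpha> s' * obs s' z))"
    by (rule sum.cong[OF refl], rule sum.swap)
  also have "\<dots> = (\<Sum>s\<in>UNIV. bel s * (\<Sum>\<alpha>\<in>UNIV. sch s \<alpha> * (\<Sum>t\<in>UNIV. Ptr P s \<alpha> t * obs t z)))"
    by (simp add: sum_distrib_left mult.assoc)
  finally show ?thesis .
qed

lemma est_up_eq: "est_up P obs bel z = {nrm (step bel sch z) | sch. validsch sch}"
proof -
  have "(\<lambda>s'. (\<Sum>s\<in>UNIV. bel s * (\<Sum>\<alpha>\<in>UNIV. sch s \<alpha> * Ptr P s \<alpha> s' * obs s' z))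
         / (\<Sum>s\<in>UNIV. bel s * (\<Sum>\<alpha>\<in>UNIV. sch s \<alpha> * (\<Sum>t\<in>UNIV. Ptr P s \<alpha> t * obs t z))))
        = nrm (step bel sch z)" for sch
    unfolding nrm_def step_sum by (simp add: step_def)
  then show ?thesis unfolding est_up_def validsch_def by (auto simp: fun_eq_iff)
qed

lemma step_scale: "step (\<lambda>s. c * u s) sch z = (\<lambda>s'. c * step u sch z s')"
  unfolding step_def by (simp add: sum_distrib_left mult.assoc)

lemma nrm_step_nrm: assumes "\<forall>s. 0 \<le> u s"
  shows "nrm (step (nrm u) sch z) = nrm (step u sch z)"
proof (cases "(\<Sum>t\<in>UNIV. u t) = 0")
  case True
  then have "\<forall>s. u s = 0" using nonneg_sum0[OF assms] by auto
  then have "nrm u = u" unfolding nrm_def by auto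
  then show ?thesis by simp
next
  case False
  define c where "c = 1 / (\<Sum>t\<in>UNIV. u t)"
  have e: "nrm u = (\<lambda>s. c * u s)" unfolding nrm_def c_def by auto
  have "c \<noteq> 0" using False unfolding c_def by simp
  then show ?thesis unfolding e step_scale by (rule nrm_scale)
qed

lemma est_rev_eq: "ys \<noteq> [] \<Longrightarrow> est_rev iota P obs ys = nrm ` UMr ys"
proof (induction ys rule: UMr.induct)
  case (2 z)
  then show ?case by (simp add: bel_init_def nrm_def u0_def)
next
  case (3 z y ys)
  have "est_rev iota P obs (z # y # ys) = (\<Union>u\<in>UMr (y # ys). est_up P obs (nrm u) z)"
    using 3 by simp
  also have "\<dots> = (\<Union>u\<in>UMr (y # ys). {nrm (step u sch z) | sch. validsch sch})"
    by (rule SUP_cong[OF refl]) (simp add: est_up_eq nrm_step_nrm UMr_nn)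
  also have "\<dots> = nrm ` UMr (z # y # ys)" by auto
  finally show ?case .
qed auto

lemma best_vertex:
  assumes ne: "ys \<noteq> []" and r: "\<forall>s. 0 \<le> r s"
  shows "\<exists>g\<in>GDr ys. nrm g \<in> Vert (nrm ` UMr ys) \<and> (\<forall>x\<in>nrm ` UMr ys. dotv x r \<le> dotv (nrm g) r)"
proof -
  define G where "G = GDr ys"
  have finG: "finite G" and neG: "G \<noteq> {}" using GDr_fin GDr_ne[OF ne] unfolding G_def by auto
  define M where "M = Max ((\<lambda>g. dotv (nrm g) r) ` G)"
  define G1 where "G1 = {g\<in>G. dotv (nrm g) r = M}"
  have "M \<in> (\<lambda>g. dotv (nrm g) r) ` G" unfolding M_def using finG neG by (intro Max_in) auto
  then have neG1: "G1 \<noteq> {}" unfolding G1_def by auto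
  have finG1: "finite G1" unfolding G1_def using finG by simp
  have Mge: "\<forall>g\<in>G. dotv (nrm g) r \<le> M" unfolding M_def using finG by auto
  define B where "B = Max ((\<lambda>g. sqv (nrm g)) ` G1)"
  have "B \<in> (\<lambda>g. sqv (nrm g)) ` G1" unfolding B_def using finG1 neG1 by (intro Max_in) auto
  then obtain gs where gs: "gs \<in> G1" "sqv (nrm gs) = B" by auto
  have Bge: "\<forall>g\<in>G1. sqv (nrm g) \<le> B" unfolding B_def using finG1 by auto
  have gsG: "gs \<in> G" and gsM: "dotv (nrm gs) r = M" using gs unfolding G1_def by auto
  have nnG: "\<forall>s. 0 \<le> g s" if "g \<in> G" for g using that GDr_sub UMr_nn unfolding G_def by blast
  have "0 \<le> dotv (nrm gs) r" unfolding dotv_def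
    by (intro sum_nonneg mult_nonneg_nonneg) (auto simp: nrm_nonneg nnG gsG r)
  then have M0: "0 \<le> M" using gsM by simp
  have key: "dotv x r \<le> M \<and> (dotv x r = M \<longrightarrow> sqv x \<le> B)" if xE: "x \<in> nrm ` UMr ys" for x
  proof -
    obtain u where u: "u \<in> UMr ys" "x = nrm u" using xE by auto
    have unn: "\<forall>s. 0 \<le> u s" using UMr_nn u(1) by blast
    obtain c where c: "\<forall>g\<in>G. 0 \<le> c g" "(\<Sum>g\<in>G. c g) = 1" and uc: "u = (\<lambda>s. \<Sum>g\<in>G. c g * g s)"
      using UMr_cc[OF u(1)] unfolding cc_def G_def by blast
    show ?thesis
    proof (cases "(\<Sum>t\<in>UNIV. u t) = 0")
      case True
      then have "x = (\<lambda>s. 0)" unfolding u nrm_def by auto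
      then have "dotv x r = 0" "sqv x = 0" unfolding dotv_def sqv_def by auto
      moreover have "0 \<le> B" using gs(2) sqv_nonneg by metis
      ultimately show ?thesis using M0 by simp
    next
      case False
      define su where "su = (\<Sum>t\<in>UNIV. u t)"
      define d where "d g = c g * (\<Sum>t\<in>UNIV. g t) / su" for g
      have su0: "su > 0" using False unn unfolding su_def by (simp add: less_le sum_nonneg)
      have sumu: "su = (\<Sum>g\<in>G. c g * (\<Sum>t\<in>UNIV. g t))"
      proof -
        have "su = (\<Sum>t\<in>UNIV. \<Sum>g\<in>G. c g * g t)" unfolding su_def by (subst uc) simp
        also have "\<dots> = (\<Sum>g\<in>G. \<Sum>t\<in>UNIV. c g * g t)" by (rule sum.swap)
        finally show ?thesis by (simp add: sum_distrib_left)
      qed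
      have d1: "(\<Sum>g\<in>G. d g) = 1"
      proof -
        have "(\<Sum>g\<in>G. d g) = (\<Sum>g\<in>G. c g * (\<Sum>t\<in>UNIV. g t)) / su"
          unfolding d_def by (simp add: sum_divide_distrib)
        then show ?thesis using su0 sumu by simp
      qed
      have d0: "\<forall>g\<in>G. 0 \<le> d g" unfolding d_def using c(1) su0 nnG
        by (auto intro!: divide_nonneg_pos mult_nonneg_nonneg sum_nonneg)
      have xd: "x = (\<lambda>s. \<Sum>g\<in>G. d g * nrm g s)"
      proof
        fix s
        have "u s = (\<Sum>g\<in>G. c g * ((\<Sum>t\<in>UNIV. g t) * nrm g s))"
          unfolding uc using nrm_times[OF nnG] by (intro sum.cong) auto
        then have "x s = (\<Sum>g\<in>G. c g * ((\<Sum>t\<in>UNIV. g t) * nrm g s)) / su"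
          unfolding u(2) nrm_def su_def by simp
        also have "\<dots> = (\<Sum>g\<in>G. d g * nrm g s)"
          unfolding d_def sum_divide_distrib by (intro sum.cong) auto
        finally show "x s = (\<Sum>g\<in>G. d g * nrm g s)" .
      qed
      have sq: "\<forall>g\<in>G. dotv (nrm g) r = M \<longrightarrow> sqv (nrm g) \<le> B"
        using Bge unfolding G1_def by auto
      show ?thesis by (rule cc_bound[OF finG d0 d1 xd Mge sq])
    qed
  qed
  have bE: "nrm gs \<in> nrm ` UMr ys" using gsG GDr_sub unfolding G_def by auto
  have "nrm gs \<in> Vert (nrm ` UMr ys)"
    by (rule vertex_crit[OF bE]) (use key gsM gs(2) in auto)
  moreover have "\<forall>x\<in>nrm ` UMr ys. dotv x r \<le> dotv (nrm gs) r" using key gsM by auto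
  ultimately show ?thesis using gsG unfolding G_def by blast
qed

end

context mdp begin

lemma finite_Paths: "finite (Paths iota P \<tau>)"
proof -
  have "Paths iota P \<tau> \<subseteq> {ss. set ss \<subseteq> UNIV \<and> length ss = length \<tau>} \<times> {as. set as \<subseteq> UNIV \<and> length as = length \<tau> - 1}"
    unfolding Paths_def is_path_def by (auto simp: Let_def)
  moreover have "finite ({ss::'s list. set ss \<subseteq> UNIV \<and> length ss = length \<tau>} \<times> {as::'a list. set as \<subseteq> UNIV \<and> length as = length \<tau> - 1})"
    by (intro finite_cartesian_product finite_lists_length_eq) auto
  ultimately show ?thesis by (rule finite_subset)
qed

lemma path_len: "is_path iota P (ss, as) \<Longrightarrow> length ss = length as + 1"
  unfolding is_path_def by (simp add: Let_def)

lemma path_snoc_iff: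
  assumes len: "length ss = length as + 1"
  shows "is_path iota P (ss @ [s'], as @ [\<alpha>]) \<longleftrightarrow>
     is_path iota P (ss, as) \<and> P (last ss) \<alpha> \<noteq> None \<and> Ptr P (last ss) \<alpha> s' > 0"
proof -
  have ne: "ss \<noteq> []" using len by auto
  have l: "last ss = ss ! length as" using len ne by (simp add: last_conv_nth)
  have a: "(ss @ [s']) ! 0 = ss ! 0" using ne by (simp add: nth_append)
  have b: "(\<forall>i < Suc (length as). P ((ss @ [s']) ! i) ((as @ [\<alpha>]) ! i) \<noteq> None \<and> Ptr P ((ss @ [s']) ! i) ((as @ [\<alpha>]) ! i) ((ss @ [s']) ! Suc i) > 0)
     \<longleftrightarrow> (\<forall>i < length as. P (ss ! i) (as ! i) \<noteq> None \<and> Ptr P (ss ! i) (as ! i) (ss ! Suc i) > 0)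
         \<and> P (last ss) \<alpha> \<noteq> None \<and> Ptr P (last ss) \<alpha> s' > 0"
    unfolding All_less_Suc using len l by (auto simp: nth_append)
  show ?thesis unfolding is_path_def Let_def using len a b by auto
qed

lemma Pr_path_snoc:
  assumes len: "length ss = length as + 1"
  shows "Pr_path iota P \<sigma> (ss @ [s'], as @ [\<alpha>]) = Pr_path iota P \<sigma> (ss, as) * (\<sigma> ss as \<alpha> * Ptr P (last ss) \<alpha> s')"
proof -
  have ne: "ss \<noteq> []" using len by auto
  have l: "last ss = ss ! length as" using len ne by (simp add: last_conv_nth)
  have a: "(ss @ [s']) ! 0 = ss ! 0" using ne by (simp add: nth_append)
  have c: "(\<Prod>i<length as. \<sigma> (take (Suc i) (ss @ [s'])) (take i (as @ [\<alpha>])) ((as @ [\<alpha>]) ! i) * Ptr P ((ss @ [s']) ! i) ((as @ [\<alpha>]) ! i) ((ss @ [s']) ! Suc i))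
     = (\<Prod>i<length as. \<sigma> (take (Suc i) ss) (take i as) (as ! i) * Ptr P (ss ! i) (as ! i) (ss ! Suc i))"
    using len by (intro prod.cong) (auto simp: nth_append)
  have d: "\<sigma> (take (Suc (length as)) (ss @ [s'])) (take (length as) (as @ [\<alpha>])) ((as @ [\<alpha>]) ! length as) *
     Ptr P ((ss @ [s']) ! length as) ((as @ [\<alpha>]) ! length as) ((ss @ [s']) ! Suc (length as)) = \<sigma> ss as \<alpha> * Ptr P (last ss) \<alpha> s'"
    using len l by (simp add: nth_append)
  show ?thesis unfolding Pr_path_def Let_def using a c d by (simp add: mult.assoc)
qed

lemma Pr_obs_snoc:
  assumes len: "length ss = length \<tau>"
  shows "Pr_obs obs (\<tau> @ [z]) (ss @ [s'], as2) = Pr_obs obs \<tau> (ss, as) * obs s' z"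
proof -
  have c: "(\<Prod>i<length \<tau>. obs ((ss @ [s']) ! i) ((\<tau> @ [z]) ! i)) = (\<Prod>i<length \<tau>. obs (ss ! i) (\<tau> ! i))"
    using len by (intro prod.cong) (auto simp: nth_append)
  show ?thesis unfolding Pr_obs_def using len c by (simp add: nth_append)
qed

lemma prefix_path:
  assumes p: "is_path iota P (ss, as)" and i: "i < length as"
  shows "is_path iota P (take (Suc i) ss, take i as)"
  using p i unfolding is_path_def Let_def by auto

lemma Pr_path_nn:
  assumes s: "is_scheduler iota P \<sigma>" and p: "is_path iota P (ss, as)"
  shows "0 \<le> Pr_path iota P \<sigma> (ss, as)"
proof -
  have "0 \<le> \<sigma> (take (Suc i) ss) (take i as) (as ! i)" if "i < length as" for i
    using s prefix_path[OF p that] unfolding is_scheduler_def is_distr_def by blast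
  then show ?thesis unfolding Pr_path_def Let_def
    by (auto intro!: mult_nonneg_nonneg prod_nonneg iota_nn Ptr_nn)
qed

lemma Pr_obs_nn: "0 \<le> Pr_obs obs \<tau> \<pi>"
  unfolding Pr_obs_def by (auto intro!: prod_nonneg obs_nn)

definition wv :: "('s list \<Rightarrow> 'a list \<Rightarrow> 'a \<Rightarrow> real) \<Rightarrow> 'z list \<Rightarrow> 's \<Rightarrow> real" where
  "wv \<sigma> \<tau> = (\<lambda>s. \<Sum>\<pi>\<in>{\<pi>\<in>Paths iota P \<tau>. last (fst \<pi>) = s}. Pr_path iota P \<sigma> \<pi> * Pr_obs obs \<tau> \<pi>)"

definition mu :: "('s list \<Rightarrow> 'a list \<Rightarrow> 'a \<Rightarrow> real) \<Rightarrow> 'z list \<Rightarrow> 's \<Rightarrow> 'a \<Rightarrow> real" where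
  "mu \<sigma> \<tau> = (\<lambda>s \<alpha>. \<Sum>\<pi>\<in>{\<pi>\<in>Paths iota P \<tau>. last (fst \<pi>) = s}.
       Pr_path iota P \<sigma> \<pi> * Pr_obs obs \<tau> \<pi> * \<sigma> (fst \<pi>) (snd \<pi>) \<alpha>)"

lemma Paths_snoc:
  assumes ne: "\<tau> \<noteq> []"
  shows "{\<pi>\<in>Paths iota P (\<tau> @ [z]). last (fst \<pi>) = s'} =
    (\<lambda>(\<pi>, \<alpha>). (fst \<pi> @ [s'], snd \<pi> @ [\<alpha>])) `
      {(\<pi>, \<alpha>). \<pi> \<in> Paths iota P \<tau> \<and> P (last (fst \<pi>)) \<alpha> \<noteq> None \<and> Ptr P (last (fst \<pi>)) \<alpha> s' > 0}"
  (is "?L = ?R")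
proof
  show "?R \<subseteq> ?L"
  proof
    fix x assume "x \<in> ?R"
    then obtain ss as \<alpha> where x: "x = (ss @ [s'], as @ [\<alpha>])" and p: "(ss, as) \<in> Paths iota P \<tau>"
      and c: "P (last ss) \<alpha> \<noteq> None" "Ptr P (last ss) \<alpha> s' > 0" by auto
    have len: "length ss = length as + 1" using p path_len unfolding Paths_def by auto
    show "x \<in> ?L" using p c len path_snoc_iff[OF len] unfolding x Paths_def by auto
  qed
next
  show "?L \<subseteq> ?R"
  proof
    fix x assume xL: "x \<in> ?L"
    obtain ss2 as2 where x: "x = (ss2, as2)" by fastforce
    have p2: "is_path iota P (ss2, as2)" and l2: "length ss2 = length \<tau> + 1" and ls: "last ss2 = s'"
      using xL unfolding x Paths_def by auto
    have la2: "length as2 = length \<tau>" using path_len[OF p2] l2 by simp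
    define ss where "ss = butlast ss2"
    define as where "as = butlast as2"
    define \<alpha> where "\<alpha> = last as2"
    have ne2: "ss2 \<noteq> []" "as2 \<noteq> []" using l2 la2 ne by auto
    have e1: "ss2 = ss @ [s']" unfolding ss_def using ne2 ls by (metis append_butlast_last_id)
    have e2: "as2 = as @ [\<alpha>]" unfolding as_def \<alpha>_def using ne2 by simp
    have len: "length ss = length as + 1" using l2 la2 ne2 ne unfolding ss_def as_def by simp
    have lt: "length ss = length \<tau>" using l2 unfolding ss_def by simp
    from p2[unfolded e1 e2] have "is_path iota P (ss, as) \<and> P (last ss) \<alpha> \<noteq> None \<and> Ptr P (last ss) \<alpha> s' > 0"
      using path_snoc_iff[OF len] by simp
    then show "x \<in> ?R" unfolding x e1 e2 Paths_def using lt by (auto intro!: image_eqI[of _ _ "((ss, as), \<alpha>)"])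
  qed
qed

lemma wv_snoc:
  assumes ne: "\<tau> \<noteq> []"
  shows "wv \<sigma> (\<tau> @ [z]) s' = (\<Sum>s\<in>UNIV. \<Sum>\<alpha>\<in>UNIV. mu \<sigma> \<tau> s \<alpha> * Ptr P s \<alpha> s' * obs s' z)"
proof -
  define A where "A = {(\<pi>, \<alpha>). \<pi> \<in> Paths iota P \<tau> \<and> P (last (fst \<pi>)) \<alpha> \<noteq> None \<and> Ptr P (last (fst \<pi>)) \<alpha> s' > 0}"
  define ext where "ext = (\<lambda>(\<pi>::'s list \<times> 'a list, \<alpha>::'a). (fst \<pi> @ [s'], snd \<pi> @ [\<alpha>]))"
  define H where "H \<pi> \<alpha> = Pr_path iota P \<sigma> \<pi> * Pr_obs obs \<tau> \<pi> * \<sigma> (fst \<pi>) (snd \<pi>) \<alpha> * (Ptr P (last (fst \<pi>)) \<alpha> s' * obs s' z)"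
    for \<pi> \<alpha>
  have inj: "inj_on ext A" unfolding ext_def inj_on_def by auto
  have finA: "finite (Paths iota P \<tau> \<times> (UNIV :: 'a set))" by (intro finite_cartesian_product finite_Paths) simp
  have AS: "A \<subseteq> Paths iota P \<tau> \<times> UNIV" unfolding A_def by auto
  have Hext: "Pr_path iota P \<sigma> (ext p) * Pr_obs obs (\<tau> @ [z]) (ext p) = H (fst p) (snd p)" if "p \<in> A" for p
  proof -
    obtain ss as \<alpha> where p: "p = ((ss, as), \<alpha>)" by (metis prod.collapse)
    have pa: "(ss, as) \<in> Paths iota P \<tau>" using that unfolding p A_def by auto
    have len: "length ss = length as + 1" using pa path_len unfolding Paths_def by auto
    have lt: "length ss = length \<tau>" using pa unfolding Paths_def by auto
    have o: "Pr_obs obs (\<tau> @ [z]) (ss @ [s'], as @ [\<alpha>]) = Pr_obs obs \<tau> (ss, as) * obs s' z"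
      by (rule Pr_obs_snoc[OF lt])
    show ?thesis unfolding p ext_def H_def
      using Pr_path_snoc[OF len] o by (simp add: algebra_simps)
  qed
  have "wv \<sigma> (\<tau> @ [z]) s' = (\<Sum>x\<in>ext ` A. Pr_path iota P \<sigma> x * Pr_obs obs (\<tau> @ [z]) x)"
    unfolding wv_def Paths_snoc[OF ne] A_def ext_def by simp
  also have "\<dots> = (\<Sum>p\<in>A. H (fst p) (snd p))"
    by (subst sum.reindex[OF inj]) (simp add: Hext)
  also have "\<dots> = (\<Sum>p\<in>Paths iota P \<tau> \<times> UNIV. H (fst p) (snd p))"
  proof (rule sum.mono_neutral_left[OF finA AS], rule ballI)
    fix p assume p: "p \<in> Paths iota P \<tau> \<times> UNIV - A"
    then have "P (last (fst (fst p))) (snd p) = None \<or> \<not> Ptr P (last (fst (fst p))) (snd p) s' > 0"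
      unfolding A_def by auto
    then have "Ptr P (last (fst (fst p))) (snd p) s' = 0"
      using Ptr_nn[of "last (fst (fst p))" "snd p" s'] unfolding Ptr_def by (auto split: option.splits)
    then show "H (fst p) (snd p) = 0" unfolding H_def by simp
  qed
  also have "\<dots> = (\<Sum>\<pi>\<in>Paths iota P \<tau>. \<Sum>\<alpha>\<in>UNIV. H \<pi> \<alpha>)"
    by (simp add: sum.cartesian_product split_def)
  also have "\<dots> = (\<Sum>s\<in>UNIV. \<Sum>\<pi>\<in>{\<pi>\<in>Paths iota P \<tau>. last (fst \<pi>) = s}. \<Sum>\<alpha>\<in>UNIV. H \<pi> \<alpha>)"
    by (rule sum.group[symmetric]) (auto simp: finite_Paths)
  also have "\<dots> = (\<Sum>s\<in>UNIV. \<Sum>\<alpha>\<in>UNIV. mu \<sigma> \<tau> s \<alpha> * Ptr P s \<alpha> s' * obs s' z)"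
  proof (rule sum.cong[OF refl])
    fix s
    have "(\<Sum>\<pi>\<in>{\<pi>\<in>Paths iota P \<tau>. last (fst \<pi>) = s}. \<Sum>\<alpha>\<in>UNIV. H \<pi> \<alpha>) =
      (\<Sum>\<pi>\<in>{\<pi>\<in>Paths iota P \<tau>. last (fst \<pi>) = s}. \<Sum>\<alpha>\<in>UNIV.
         Pr_path iota P \<sigma> \<pi> * Pr_obs obs \<tau> \<pi> * \<sigma> (fst \<pi>) (snd \<pi>) \<alpha> * (Ptr P s \<alpha> s' * obs s' z))"
      unfolding H_def by (intro sum.cong) auto
    also have "\<dots> = (\<Sum>\<alpha>\<in>UNIV. \<Sum>\<pi>\<in>{\<pi>\<in>Paths iota P \<tau>. last (fst \<pi>) = s}.
         Pr_path iota P \<sigma> \<pi> * Pr_obs obs \<tau> \<pi> * \<sigma> (fst \<pi>) (snd \<pi>) \<alpha> * (Ptr P s \<alpha> s' * obs s' z))"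
      by (rule sum.swap)
    also have "\<dots> = (\<Sum>\<alpha>\<in>UNIV. mu \<sigma> \<tau> s \<alpha> * Ptr P s \<alpha> s' * obs s' z)"
      unfolding mu_def by (simp add: sum_distrib_right mult.assoc)
    finally show "(\<Sum>\<pi>\<in>{\<pi>\<in>Paths iota P \<tau>. last (fst \<pi>) = s}. \<Sum>\<alpha>\<in>UNIV. H \<pi> \<alpha>) =
      (\<Sum>\<alpha>\<in>UNIV. mu \<sigma> \<tau> s \<alpha> * Ptr P s \<alpha> s' * obs s' z)" .
  qed
  finally show ?thesis .
qed

lemma wv_single: "wv \<sigma> [z] = u0 z"
proof
  fix s
  have "{\<pi>\<in>Paths iota P [z]. last (fst \<pi>) = s} = (if iota s > 0 then {([s], [])} else {})"
  proof -
    have "\<pi> \<in> Paths iota P [z] \<and> last (fst \<pi>) = s \<longleftrightarrow> iota s > 0 \<and> \<pi> = ([s], [])" for \<pi> :: "'s list \<times> 'a list"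
    proof -
      obtain ss as where p: "\<pi> = (ss, as)" by fastforce
      show ?thesis unfolding p Paths_def is_path_def Let_def
        by (cases ss; cases as) auto
    qed
    then show ?thesis by auto
  qed
  moreover have "Pr_path iota P \<sigma> ([s], []) = iota s" unfolding Pr_path_def by simp
  moreover have "Pr_obs obs [z] ([s], []) = obs s z" unfolding Pr_obs_def by simp
  ultimately show "wv \<sigma> [z] s = u0 z s"
    unfolding wv_def u0_def using iota_nn[of s] by auto
qed

end

context mdp begin

lemma sched_nn: "is_scheduler iota P \<sigma> \<Longrightarrow> \<pi> \<in> Paths iota P \<tau> \<Longrightarrow> 0 \<le> \<sigma> (fst \<pi>) (snd \<pi>) \<alpha>"
  unfolding is_scheduler_def Paths_def is_distr_def by (cases \<pi>) auto

lemma weight_nn: "is_scheduler iota P \<sigma> \<Longrightarrow> \<pi> \<in> Paths iota P \<tau> \<Longrightarrow> 0 \<le> Pr_path iota P \<sigma> \<pi> * Pr_obs obs \<tau> \<pi>"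
  unfolding Paths_def by (cases \<pi>) (auto intro!: mult_nonneg_nonneg Pr_path_nn Pr_obs_nn)

lemma mu_nn: "is_scheduler iota P \<sigma> \<Longrightarrow> 0 \<le> mu \<sigma> \<tau> s \<alpha>"
proof -
  assume s: "is_scheduler iota P \<sigma>"
  show ?thesis unfolding mu_def
  proof (rule sum_nonneg)
    fix \<pi> assume "\<pi> \<in> {\<pi>\<in>Paths iota P \<tau>. last (fst \<pi>) = s}"
    then have pi: "\<pi> \<in> Paths iota P \<tau>" by simp
    show "0 \<le> Pr_path iota P \<sigma> \<pi> * Pr_obs obs \<tau> \<pi> * \<sigma> (fst \<pi>) (snd \<pi>) \<alpha>"
      by (rule mult_nonneg_nonneg[OF weight_nn[OF s pi] sched_nn[OF s pi]])
  qed
qed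

lemma wv_nn: "is_scheduler iota P \<sigma> \<Longrightarrow> 0 \<le> wv \<sigma> \<tau> s"
  unfolding wv_def by (intro sum_nonneg) (auto intro: weight_nn)

lemma mu_sum: assumes s: "is_scheduler iota P \<sigma>" shows "(\<Sum>\<alpha>\<in>UNIV. mu \<sigma> \<tau> s \<alpha>) = wv \<sigma> \<tau> s"
proof -
  have "(\<Sum>\<alpha>\<in>UNIV. mu \<sigma> \<tau> s \<alpha>) = (\<Sum>\<pi>\<in>{\<pi>\<in>Paths iota P \<tau>. last (fst \<pi>) = s}. \<Sum>\<alpha>\<in>UNIV.
       Pr_path iota P \<sigma> \<pi> * Pr_obs obs \<tau> \<pi> * \<sigma> (fst \<pi>) (snd \<pi>) \<alpha>)"
    unfolding mu_def by (rule sum.swap)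
  also have "\<dots> = (\<Sum>\<pi>\<in>{\<pi>\<in>Paths iota P \<tau>. last (fst \<pi>) = s}. Pr_path iota P \<sigma> \<pi> * Pr_obs obs \<tau> \<pi>)"
  proof (rule sum.cong[OF refl])
    fix \<pi> assume "\<pi> \<in> {\<pi>\<in>Paths iota P \<tau>. last (fst \<pi>) = s}"
    then have "(\<Sum>\<alpha>\<in>UNIV. \<sigma> (fst \<pi>) (snd \<pi>) \<alpha>) = 1"
      using s unfolding is_scheduler_def Paths_def is_distr_def by (cases \<pi>) auto
    then show "(\<Sum>\<alpha>\<in>UNIV. Pr_path iota P \<sigma> \<pi> * Pr_obs obs \<tau> \<pi> * \<sigma> (fst \<pi>) (snd \<pi>) \<alpha>) =
        Pr_path iota P \<sigma> \<pi> * Pr_obs obs \<tau> \<pi>" by (simp add: sum_distrib_left[symmetric])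
  qed
  finally show ?thesis unfolding wv_def .
qed

lemma mu_supp: assumes s: "is_scheduler iota P \<sigma>" and a: "\<alpha> \<notin> AvAct P s" shows "mu \<sigma> \<tau> s \<alpha> = 0"
proof -
  have "\<sigma> (fst \<pi>) (snd \<pi>) \<alpha> = 0" if "\<pi> \<in> {\<pi>\<in>Paths iota P \<tau>. last (fst \<pi>) = s}" for \<pi>
  proof -
    have "0 \<le> \<sigma> (fst \<pi>) (snd \<pi>) \<alpha>" "\<not> \<sigma> (fst \<pi>) (snd \<pi>) \<alpha> > 0"
      using that s a unfolding is_scheduler_def Paths_def is_distr_def by (cases \<pi>; auto)+
    then show ?thesis by linarith
  qed
  then show ?thesis unfolding mu_def by simp
qed

lemma mu_le: assumes s: "is_scheduler iota P \<sigma>" shows "mu \<sigma> \<tau> s \<alpha> \<le> wv \<sigma> \<tau> s"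
proof -
  have "mu \<sigma> \<tau> s \<alpha> \<le> (\<Sum>\<alpha>\<in>UNIV. mu \<sigma> \<tau> s \<alpha>)"
    by (rule member_le_sum) (auto intro: mu_nn[OF s])
  then show ?thesis using mu_sum[OF s] by simp
qed

lemma exists_sel: "\<exists>f. f \<in> Sel" using Sel_ne by auto

lemma wv_in_UMr:
  assumes "\<tau> \<noteq> []" and s: "is_scheduler iota P \<sigma>"
  shows "wv \<sigma> \<tau> \<in> UMr (rev \<tau>)"
  using assms(1)
proof (induction \<tau> rule: rev_nonempty_induct)
  case (single z)
  then show ?case by (simp add: wv_single)
next
  case (snoc z \<tau>)
  obtain y ys where r: "rev \<tau> = y # ys" using snoc(1) by (cases "rev \<tau>") auto
  obtain f0 where f0: "f0 \<in> Sel" using exists_sel by auto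
  define sch where "sch s \<alpha> = (if wv \<sigma> \<tau> s > 0 then mu \<sigma> \<tau> s \<alpha> / wv \<sigma> \<tau> s else det f0 s \<alpha>)" for s \<alpha>
  have musch: "mu \<sigma> \<tau> s \<alpha> = wv \<sigma> \<tau> s * sch s \<alpha>" for s \<alpha>
  proof (cases "wv \<sigma> \<tau> s > 0")
    case False
    then have "wv \<sigma> \<tau> s = 0" using wv_nn[OF s] by (simp add: less_le)
    then show ?thesis using mu_le[OF s, of \<tau> s \<alpha>] mu_nn[OF s, of \<tau> s \<alpha>] by simp
  qed (simp add: sch_def)
  have v: "validsch sch" unfolding validsch_def is_distr_def
  proof (intro allI conjI impI)
    fix s \<alpha>
    show "0 \<le> sch s \<alpha>" unfolding sch_def using mu_nn[OF s] wv_nn[OF s] det_valid[OF f0] validsch_nn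
      by auto
  next
    fix s
    show "(\<Sum>\<alpha>\<in>UNIV. sch s \<alpha>) = 1"
    proof (cases "wv \<sigma> \<tau> s > 0")
      case True
      then have "(\<Sum>\<alpha>\<in>UNIV. sch s \<alpha>) = (\<Sum>\<alpha>\<in>UNIV. mu \<sigma> \<tau> s \<alpha>) / wv \<sigma> \<tau> s"
        unfolding sch_def by (simp add: sum_divide_distrib)
      then show ?thesis using True mu_sum[OF s] by simp
    next
      case False
      then show ?thesis using det_valid[OF f0] unfolding sch_def validsch_def is_distr_def by simp
    qed
  next
    fix s \<alpha> assume pos: "0 < sch s \<alpha>"
    show "\<alpha> \<in> AvAct P s"
    proof (cases "wv \<sigma> \<tau> s > 0")
      case True
      then show ?thesis using pos mu_supp[OF s] unfolding sch_def by fastforce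
    next
      case False
      then show ?thesis using pos det_valid[OF f0] unfolding sch_def validsch_def by auto
    qed
  qed
  have "wv \<sigma> (\<tau> @ [z]) = step (wv \<sigma> \<tau>) sch z"
  proof
    fix s'
    show "wv \<sigma> (\<tau> @ [z]) s' = step (wv \<sigma> \<tau>) sch z s'"
      unfolding wv_snoc[OF snoc(1)] step_def musch by (simp add: sum_distrib_left mult.assoc)
  qed
  then show ?case using snoc(2) v r by auto
qed

lemma UMr_wv:
  assumes "\<tau> \<noteq> []" and u: "u \<in> UMr (rev \<tau>)"
  shows "\<exists>\<sigma>. is_scheduler iota P \<sigma> \<and> wv \<sigma> \<tau> = u"
  using assms
proof (induction \<tau> arbitrary: u rule: rev_nonempty_induct)
  case (single z)
  obtain f0 where f0: "f0 \<in> Sel" using exists_sel by auto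
  define \<sigma> where "\<sigma> = (\<lambda>(ss::'s list) (as::'a list). det f0 (last ss))"
  have "is_scheduler iota P \<sigma>"
    using det_valid[OF f0] unfolding is_scheduler_def \<sigma>_def validsch_def by auto
  moreover have "u = u0 z" using single by simp
  ultimately show ?case using wv_single by blast
next
  case (snoc z \<tau>)
  obtain y ys where r: "rev \<tau> = y # ys" using snoc(1) by (cases "rev \<tau>") auto
  from snoc(3) obtain v sch where u: "u = step v sch z" and v: "v \<in> UMr (rev \<tau>)" and sch: "validsch sch"
    using r by auto
  obtain \<sigma> where s: "is_scheduler iota P \<sigma>" and wv: "wv \<sigma> \<tau> = v" using snoc(2)[OF v] by blast
  define \<sigma>' where "\<sigma>' = (\<lambda>(ss::'s list) (as::'a list). if length ss = length \<tau> then sch (last ss) else \<sigma> ss as)"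
  have s': "is_scheduler iota P \<sigma>'"
    using s sch unfolding is_scheduler_def \<sigma>'_def validsch_def by auto
  have pp: "Pr_path iota P \<sigma>' \<pi> = Pr_path iota P \<sigma> \<pi>" if "\<pi> \<in> Paths iota P \<tau>" for \<pi>
  proof -
    obtain ss as where p: "\<pi> = (ss, as)" by fastforce
    have len: "length ss = length as + 1" "length ss = length \<tau>"
      using that path_len unfolding p Paths_def by auto
    show ?thesis unfolding p Pr_path_def Let_def \<sigma>'_def
      using len by (intro arg_cong2[where f="(*)"] refl prod.cong) auto
  qed
  have wv': "wv \<sigma>' \<tau> = v" unfolding wv[symmetric] wv_def using pp by (intro ext sum.cong) auto
  have mu': "mu \<sigma>' \<tau> s \<alpha> = wv \<sigma>' \<tau> s * sch s \<alpha>" for s \<alpha>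
  proof -
    have "mu \<sigma>' \<tau> s \<alpha> = (\<Sum>\<pi>\<in>{\<pi>\<in>Paths iota P \<tau>. last (fst \<pi>) = s}. Pr_path iota P \<sigma>' \<pi> * Pr_obs obs \<tau> \<pi> * sch s \<alpha>)"
      unfolding mu_def \<sigma>'_def by (intro sum.cong) (auto simp: Paths_def split_def)
    then show ?thesis unfolding wv_def by (simp add: sum_distrib_right)
  qed
  have "wv \<sigma>' (\<tau> @ [z]) = u"
  proof
    fix s'
    show "wv \<sigma>' (\<tau> @ [z]) s' = u s'"
      unfolding wv_snoc[OF snoc(1)] u step_def mu' wv' by (simp add: sum_distrib_left mult.assoc)
  qed
  then show ?case using s' by blast
qed

lemma value_eq:
  "(\<Sum>\<pi>\<in>Paths iota P \<tau>. Pr_cond iota P obs \<sigma> \<pi> \<tau> * r (last (fst \<pi>))) = dotv (nrm (wv \<sigma> \<tau>)) r"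
proof -
  define T where "T = Pr_trace iota P obs \<sigma> \<tau>"
  have T: "T = (\<Sum>s\<in>UNIV. wv \<sigma> \<tau> s)"
    unfolding T_def Pr_trace_def wv_def by (rule sum.group[symmetric]) (auto simp: finite_Paths)
  have "(\<Sum>\<pi>\<in>Paths iota P \<tau>. Pr_cond iota P obs \<sigma> \<pi> \<tau> * r (last (fst \<pi>))) =
     (\<Sum>s\<in>UNIV. \<Sum>\<pi>\<in>{\<pi>\<in>Paths iota P \<tau>. last (fst \<pi>) = s}. Pr_cond iota P obs \<sigma> \<pi> \<tau> * r (last (fst \<pi>)))"
    by (rule sum.group[symmetric]) (auto simp: finite_Paths)
  also have "\<dots> = (\<Sum>s\<in>UNIV. \<Sum>\<pi>\<in>{\<pi>\<in>Paths iota P \<tau>. last (fst \<pi>) = s}. Pr_path iota P \<sigma> \<pi> * Pr_obs obs \<tau> \<pi> / T * r s)"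
    unfolding Pr_cond_def T_def by (intro sum.cong) (auto simp: mult.commute)
  also have "\<dots> = (\<Sum>s\<in>UNIV. wv \<sigma> \<tau> s / T * r s)"
    unfolding wv_def by (simp add: sum_distrib_right sum_divide_distrib)
  also have "\<dots> = dotv (nrm (wv \<sigma> \<tau>)) r" unfolding dotv_def nrm_def T by simp
  finally show ?thesis .
qed

end

theorem theorem2:
  fixes iota :: "'s::finite \<Rightarrow> real"
    and P :: "'s \<Rightarrow> 'a::finite \<Rightarrow> ('s \<Rightarrow> real) option"
    and obs :: "'s \<Rightarrow> 'z::finite \<Rightarrow> real"
    and \<tau> :: "'z list"
    and r :: "'s \<Rightarrow> real"
  assumes "is_mdp iota P obs"
    and "\<tau> \<noteq> []"
    and "\<forall>s. 0 \<le> r s"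
  shows "\<exists>bel \<in> Vert (est_MDP iota P obs \<tau>).
           Risk iota P obs r \<tau> = (\<Sum>s\<in>UNIV. bel s * r s) \<and>
           (\<forall>bel' \<in> Vert (est_MDP iota P obs \<tau>). (\<Sum>s\<in>UNIV. bel' s * r s) \<le> Risk iota P obs r \<tau>)"
proof -
  interpret mdp iota P obs by unfold_locales (rule assms(1))
  have ne: "rev \<tau> \<noteq> []" using assms(2) by simp
  have E: "est_MDP iota P obs \<tau> = nrm ` UMr (rev \<tau>)"
    unfolding est_MDP_def by (rule est_rev_eq[OF ne])
  obtain g where g: "g \<in> GDr (rev \<tau>)" and gv: "nrm g \<in> Vert (nrm ` UMr (rev \<tau>))"
    and gmax: "\<forall>x\<in>nrm ` UMr (rev \<tau>). dotv x r \<le> dotv (nrm g) r"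
    using best_vertex[OF ne assms(3)] by blast
  obtain \<sigma>0 where s0: "is_scheduler iota P \<sigma>0" and w0: "wv \<sigma>0 \<tau> = g"
    using UMr_wv[OF assms(2)] g GDr_sub by blast
  define f where "f \<sigma> = (\<Sum>\<pi>\<in>Paths iota P \<tau>. Pr_cond iota P obs \<sigma> \<pi> \<tau> * r (last (fst \<pi>)))" for \<sigma>
  have R: "Risk iota P obs r \<tau> = Sup (f ` {\<sigma>. is_scheduler iota P \<sigma>})"
    unfolding Risk_def f_def by simp
  have "Sup (f ` {\<sigma>. is_scheduler iota P \<sigma>}) = dotv (nrm g) r"
  proof (rule cSup_eq_maximum)
    show "dotv (nrm g) r \<in> f ` {\<sigma>. is_scheduler iota P \<sigma>}"
      using s0 w0 value_eq unfolding f_def by (auto intro!: image_eqI[of _ _ \<sigma>0])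
  next
    fix x assume "x \<in> f ` {\<sigma>. is_scheduler iota P \<sigma>}"
    then obtain \<sigma> where s: "is_scheduler iota P \<sigma>" and x: "x = f \<sigma>" by auto
    have "x = dotv (nrm (wv \<sigma> \<tau>)) r" unfolding x f_def by (rule value_eq)
    then show "x \<le> dotv (nrm g) r" using gmax wv_in_UMr[OF assms(2) s] by auto
  qed
  then have Rg: "Risk iota P obs r \<tau> = dotv (nrm g) r" using R by simp
  show ?thesis
  proof (intro bexI conjI ballI)
    show "Risk iota P obs r \<tau> = (\<Sum>s\<in>UNIV. nrm g s * r s)" using Rg unfolding dotv_def .
    show "nrm g \<in> Vert (est_MDP iota P obs \<tau>)" using gv E by simp
  next
    fix bel' assume "bel' \<in> Vert (est_MDP iota P obs \<tau>)"
    then have "bel' \<in> nrm ` UMr (rev \<tau>)" using E unfolding Vert_def by auto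
    then show "(\<Sum>s\<in>UNIV. bel' s * r s) \<le> Risk iota P obs r \<tau>" using gmax Rg unfolding dotv_def by auto
  qed
qed

end
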